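(* Let $X$ and $Y$ be compact metric spaces, with $d$ the metric on $X$. Let $\phi:\mathrm{C}(X)\to \mathrm{M}_n(\mathrm{C}(Y))$ be the diagonal $*$-homomorphism $\phi(f)=\mathrm{diag}(f\circ\lambda_1,\dots,f\circ\lambda_n)$ determined by continuous maps $\lambda_1,\dots,\lambda_n:Y\to X$. Let $x_0\in X$, $f\in \mathrm{C}(X)$ and $\epsilon>0$, and let $\eta>0$ be such that $|f(x)-f(y)|<\epsilon$ whenever $d(x,y)<2\eta$. Suppose $F_1,\dots,F_m$ ($m\le n$) are nonempty closed subsets of $Y$ such that $d(\lambda_i(y),x_0)<\eta$ whenever $y\in F_i$. Then there exist a unitary $u\in \mathrm{M}_m(\mathrm{C}(Y))\oplus 1_{n-m}$ and an element $b\in \mathrm{M}_{m-1}(\mathrm{C}(Y))$ such that for every $y\in\bigcup_{i=1}^m F_i$, \[ \big\| u(y)\phi(f)(y)u^*(y)-\mathrm{diag}\big(f(x_0),\,b(y),\,f(\lambda_{m+1}(y)),\dots,f(\lambda_n(y))\big)\big\|<2\epsilon \] (if $m=1$ there is no $b$ block).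
   Context: $\mathrm{M}_m(\mathrm{C}(Y))\oplus 1_{n-m}$ denotes the set of $n\times n$ matrices of the form $\begin{pmatrix} a&0\\0&1_{n-m}\end{pmatrix}$ with $a\in\mathrm{M}_m(\mathrm{C}(Y))$. *)

theory Defs
  imports "HOL-Analysis.Analysis"
begin

text \<open>Complex n x n matrices are represented as functions nat => nat => complex,
  of which only the entries with indices < n are relevant (indices are 0-based).\<close>

type_synonym cmat = "nat \<Rightarrow> nat \<Rightarrow> complex"

definition mat_mul :: "nat \<Rightarrow> cmat \<Rightarrow> cmat \<Rightarrow> cmat" where
  "mat_mul n A B = (\<lambda>i j. \<Sum>k<n. A i k * B k j)"

definition mat_adj :: "cmat \<Rightarrow> cmat" where
  "mat_adj A = (\<lambda>i j. cnj (A j i))"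

definition mat_id :: cmat where
  "mat_id = (\<lambda>i j. if i = j then 1 else 0)"

definition mat_diff :: "cmat \<Rightarrow> cmat \<Rightarrow> cmat" where
  "mat_diff A B = (\<lambda>i j. A i j - B i j)"

definition mat_eq :: "nat \<Rightarrow> cmat \<Rightarrow> cmat \<Rightarrow> bool" where
  "mat_eq n A B \<longleftrightarrow> (\<forall>i<n. \<forall>j<n. A i j = B i j)"

definition unitary_mat :: "nat \<Rightarrow> cmat \<Rightarrow> bool" where
  "unitary_mat n U \<longleftrightarrow> mat_eq n (mat_mul n U (mat_adj U)) mat_id
                      \<and> mat_eq n (mat_mul n (mat_adj U) U) mat_id"

definition vec_norm :: "nat \<Rightarrow> (nat \<Rightarrow> complex) \<Rightarrow> real" where
  "vec_norm n v = L2_set (\<lambda>i. cmod (v i)) {..<n}"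

definition mat_vec :: "nat \<Rightarrow> cmat \<Rightarrow> (nat \<Rightarrow> complex) \<Rightarrow> (nat \<Rightarrow> complex)" where
  "mat_vec n A v = (\<lambda>i. \<Sum>k<n. A i k * v k)"

definition mat_norm :: "nat \<Rightarrow> cmat \<Rightarrow> real" where
  "mat_norm n A = Sup {vec_norm n (mat_vec n A v) | v. vec_norm n v \<le> 1}"

definition diag_hom :: "(nat \<Rightarrow> 'b \<Rightarrow> 'a) \<Rightarrow> ('a \<Rightarrow> complex) \<Rightarrow> 'b \<Rightarrow> cmat" where
  "diag_hom lam f y = (\<lambda>i j. if i = j then f (lam i y) else 0)"

text \<open>The block matrix diag(c, b, f(lambda_{m+1} y), ..., f(lambda_n y)) with b of size m-1
  (0-based: entry (0,0) is c, entries (1+i,1+j) for i,j < m-1 are b i j,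
  entries (k,k) for m <= k are d k, everything else 0).\<close>

definition block_diag :: "nat \<Rightarrow> complex \<Rightarrow> cmat \<Rightarrow> (nat \<Rightarrow> complex) \<Rightarrow> cmat" where
  "block_diag m c b d = (\<lambda>i j.
     if i = 0 \<and> j = 0 then c
     else if 1 \<le> i \<and> i < m \<and> 1 \<le> j \<and> j < m then b (i - 1) (j - 1)
     else if m \<le> i \<and> i = j then d i
     else 0)"

end

theory Submission
  imports Defs
begin

lemma vec_norm_cong: "(\<And>i. i < n \<Longrightarrow> a i = b i) \<Longrightarrow> vec_norm n a = vec_norm n b"
  unfolding vec_norm_def by (rule L2_set_cong) auto

lemma vec_norm_triangle: "vec_norm n (\<lambda>i. a i + b i) \<le> vec_norm n a + vec_norm n b"
proof -
  have "vec_norm n (\<lambda>i. a i + b i) \<le> L2_set (\<lambda>i. cmod (a i) + cmod (b i)) {..<n}"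
    unfolding vec_norm_def by (rule L2_set_mono) (auto intro: norm_triangle_ineq)
  also have "\<dots> \<le> vec_norm n a + vec_norm n b"
    unfolding vec_norm_def by (rule L2_set_triangle_ineq)
  finally show ?thesis .
qed

lemma vec_norm_scale: "vec_norm n (\<lambda>i. a i * c) = vec_norm n a * cmod c"
  unfolding vec_norm_def by (simp add: L2_set_left_distrib norm_mult)

lemma vec_norm_cs: "cmod (\<Sum>j<n. a j * v j) \<le> vec_norm n a * vec_norm n v"
proof -
  have "cmod (\<Sum>j<n. a j * v j) \<le> (\<Sum>j<n. \<bar>cmod (a j)\<bar> * \<bar>cmod (v j)\<bar>)"
    by (rule order_trans[OF norm_sum]) (simp add: norm_mult)
  also have "\<dots> \<le> vec_norm n a * vec_norm n v"
    unfolding vec_norm_def by (rule L2_set_mult_ineq)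
  finally show ?thesis .
qed

lemma vec_norm_comp: "i < n \<Longrightarrow> cmod (v i) \<le> vec_norm n v"
  unfolding vec_norm_def by (rule member_le_L2_set) auto

lemma vec_norm_single: "0 < n \<Longrightarrow> vec_norm n (\<lambda>i. if i = 0 then c else 0) = cmod c"
proof -
  assume "0 < n"
  have "(\<Sum>i<n. (cmod (if i = 0 then c else 0))\<^sup>2) = (\<Sum>i<n. if i = 0 then (cmod c)\<^sup>2 else 0)"
    by (rule sum.cong) auto
  also have "\<dots> = (cmod c)\<^sup>2" using \<open>0 < n\<close> by (simp add: sum.delta)
  finally show ?thesis unfolding vec_norm_def L2_set_def by simp
qed

lemma vec_norm_zero0: "vec_norm n (\<lambda>i. if i = 0 then 0 else a i) \<le> vec_norm n a"
  unfolding vec_norm_def by (rule L2_set_mono) auto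

lemma vec_norm_orth:
  fixes A :: "nat \<Rightarrow> nat \<Rightarrow> real"
  assumes orth: "\<And>k l. k < n \<Longrightarrow> l < n \<Longrightarrow> (\<Sum>i<n. A i k * A i l) = (if k = l then 1 else 0)"
  shows "vec_norm n (\<lambda>i. \<Sum>l<n. complex_of_real (A i l) * z l) = vec_norm n z"
proof -
  have "complex_of_real (\<Sum>i<n. (cmod (\<Sum>l<n. complex_of_real (A i l) * z l))\<^sup>2)
      = (\<Sum>i<n. (\<Sum>l<n. complex_of_real (A i l) * z l) * (\<Sum>k<n. complex_of_real (A i k) * cnj (z k)))"
    unfolding of_real_sum by (rule sum.cong[OF refl]) (simp only: complex_norm_square cnj_sum complex_cnj_mult complex_cnj_complex_of_real)
  also have "\<dots> = (\<Sum>i<n. \<Sum>k<n. \<Sum>l<n. z l * cnj (z k) * complex_of_real (A i l * A i k))"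
    by (simp add: sum_distrib_left sum_distrib_right mult_ac)
  also have "\<dots> = (\<Sum>k<n. \<Sum>i<n. \<Sum>l<n. z l * cnj (z k) * complex_of_real (A i l * A i k))"
    by (rule sum.swap)
  also have "\<dots> = (\<Sum>k<n. \<Sum>l<n. \<Sum>i<n. z l * cnj (z k) * complex_of_real (A i l * A i k))"
    by (rule sum.cong[OF refl], rule sum.swap)
  also have "\<dots> = (\<Sum>k<n. \<Sum>l<n. z l * cnj (z k) * complex_of_real (\<Sum>i<n. A i l * A i k))"
    by (simp add: sum_distrib_left of_real_sum)
  also have "\<dots> = (\<Sum>k<n. \<Sum>l<n. if l = k then z l * cnj (z k) else 0)"
    by (rule sum.cong[OF refl], rule sum.cong[OF refl]) (simp add: orth)
  also have "\<dots> = (\<Sum>l<n. z l * cnj (z l))"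
    by (simp add: sum.delta)
  also have "\<dots> = complex_of_real (\<Sum>l<n. (cmod (z l))\<^sup>2)"
    unfolding of_real_sum by (rule sum.cong[OF refl]) (simp only: complex_norm_square)
  finally have "(\<Sum>i<n. (cmod (\<Sum>l<n. complex_of_real (A i l) * z l))\<^sup>2) = (\<Sum>l<n. (cmod (z l))\<^sup>2)"
    using of_real_eq_iff by blast
  then show ?thesis unfolding vec_norm_def L2_set_def by simp
qed



lemma orth_n:
  fixes Ur :: "nat \<Rightarrow> nat \<Rightarrow> real"
  assumes mn: "m \<le> n"
   and sym: "\<And>i j. Ur i j = Ur j i"
   and outside: "\<And>i j. m \<le> i \<Longrightarrow> Ur i j = (if i = j then 1 else 0)"
   and orth: "\<And>i j. i < m \<Longrightarrow> j < m \<Longrightarrow> (\<Sum>k<m. Ur i k * Ur k j) = (if i = j then 1 else 0)"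
   and ij: "i < n" "j < n"
  shows "(\<Sum>k<n. Ur i k * Ur k j) = (if i = j then 1 else 0)"
proof (cases "m \<le> i")
  case True
  have "(\<Sum>k<n. Ur i k * Ur k j) = (\<Sum>k<n. if i = k then Ur k j else 0)"
    by (rule sum.cong) (auto simp: outside[OF True])
  also have "\<dots> = Ur i j" using ij by (simp add: sum.delta)
  finally show ?thesis using outside[OF True] by simp
next
  case False
  show ?thesis
  proof (cases "m \<le> j")
    case True
    have "(\<Sum>k<n. Ur i k * Ur k j) = (\<Sum>k<n. if j = k then Ur i k else 0)"
      by (rule sum.cong) (auto simp: sym[of _ j] outside[OF True])
    also have "\<dots> = Ur i j" using ij by (simp add: sum.delta)
    finally show ?thesis using outside[OF True] sym[of i j] by auto
  next
    case False
    have "(\<Sum>k<n. Ur i k * Ur k j) = (\<Sum>k<m. Ur i k * Ur k j)"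
    proof (rule sum.mono_neutral_right)
      show "\<forall>k\<in>{..<n} - {..<m}. Ur i k * Ur k j = 0"
        using \<open>\<not> m \<le> i\<close> by (auto simp: sym[of i] outside)
    qed (use mn in auto)
    then show ?thesis using orth \<open>\<not> m \<le> i\<close> False by simp
  qed
qed

lemma core:
  fixes Ur :: "nat \<Rightarrow> nat \<Rightarrow> real" and g :: "nat \<Rightarrow> complex"
  assumes m1: "1 \<le> m" and mn: "m \<le> n"
   and sym: "\<And>i j. Ur i j = Ur j i"
   and outside: "\<And>i j. m \<le> i \<Longrightarrow> Ur i j = (if i = j then 1 else 0)"
   and orth: "\<And>i j. i < n \<Longrightarrow> j < n \<Longrightarrow> (\<Sum>k<n. Ur i k * Ur k j) = (if i = j then 1 else 0)"
   and v: "vec_norm n v \<le> 1"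
   and T: "T = (\<lambda>i j. \<Sum>l<n. complex_of_real (Ur i l) * g l * complex_of_real (Ur l j))"
  shows "vec_norm n (mat_vec n (mat_diff T (block_diag m c0 (\<lambda>i j. T (Suc i) (Suc j)) g)) v)
     \<le> 2 * vec_norm n (\<lambda>l. (g l - (if l < m then c0 else 0)) * complex_of_real (Ur l 0))"
proof -
  define U where "U = (\<lambda>i j. complex_of_real (Ur i j))"
  define h where "h = (\<lambda>l. g l - (if l < m then c0 else 0))"
  define H where "H = (\<lambda>i j. \<Sum>l<n. U i l * h l * U l j)"
  have out2: "Ur i j = (if i = j then 1 else 0)" if "m \<le> j" for i j
    using outside[OF that] sym[of i j] by auto
  have orthm: "(\<Sum>l<m. Ur i l * Ur l j) = (if i = j then 1 else 0)" if "i < m" "j < m" for i j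
  proof -
    have "(\<Sum>l<n. Ur i l * Ur l j) = (\<Sum>l<m. Ur i l * Ur l j)"
      by (rule sum.mono_neutral_right) (use mn that in \<open>auto simp: out2\<close>)
    then show ?thesis using orth[of i j] that mn by simp
  qed
  have T1: "T i j = (if i < m \<and> j < m \<and> i = j then c0 else 0) + H i j" if "i < n" "j < n" for i j
  proof -
    have "T i j = (\<Sum>l<n. U i l * ((if l < m then c0 else 0) + h l) * U l j)"
      unfolding T U_def h_def by simp
    also have "\<dots> = (\<Sum>l<n. U i l * (if l < m then c0 else 0) * U l j) + H i j"
      unfolding H_def by (simp add: distrib_left distrib_right sum.distrib)
    also have "(\<Sum>l<n. U i l * (if l < m then c0 else 0) * U l j) = (\<Sum>l<m. c0 * complex_of_real (Ur i l * Ur l j))"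
      by (rule sum.mono_neutral_cong_right) (use mn in \<open>auto simp: U_def mult_ac\<close>)
    also have "\<dots> = c0 * complex_of_real (\<Sum>l<m. Ur i l * Ur l j)"
      by (simp add: sum_distrib_left of_real_sum)
    also have "\<dots> = (if i < m \<and> j < m \<and> i = j then c0 else 0)"
    proof (cases "i < m \<and> j < m")
      case True then show ?thesis by (simp add: orthm)
    next
      case False
      have "(\<Sum>l<m. Ur i l * Ur l j) = 0"
        by (rule sum.neutral) (use False in \<open>auto simp: outside out2\<close>)
      then show ?thesis using False by auto
    qed
    finally show ?thesis .
  qed
  have H2: "H i j = (if i = j then g i else 0)" if "m \<le> i" "i < n" for i j
  proof -
    have "H i j = (\<Sum>l<n. if i = l then h l * U l j else 0)"
      unfolding H_def by (rule sum.cong) (auto simp: U_def outside[OF that(1)])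
    also have "\<dots> = h i * U i j" using that by (simp add: sum.delta)
    finally show ?thesis using that by (auto simp: U_def h_def outside)
  qed
  have H3: "H i j = 0" if "i < m" "m \<le> j" "j < n" for i j
  proof -
    have "H i j = (\<Sum>l<n. if j = l then U i l * h l else 0)"
      unfolding H_def by (rule sum.cong) (auto simp: U_def out2[OF that(2)])
    also have "\<dots> = U i j * h j" using that by (simp add: sum.delta)
    finally show ?thesis using that by (auto simp: U_def out2)
  qed
  have Hsym: "H i j = H j i" for i j
    unfolding H_def by (rule sum.cong) (auto simp: U_def sym[of _ i] sym[of _ j])
  define N where "N = mat_diff T (block_diag m c0 (\<lambda>i j. T (Suc i) (Suc j)) g)"
  have Nij: "N i j = (if i = 0 then H 0 j else if j = 0 then H i 0 else 0)" if "i < n" "j < n" for i j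
  proof -
    consider "i = 0" | "i \<noteq> 0" "j = 0" | "i \<noteq> 0" "j \<noteq> 0" "i < m" "j < m"
      | "i \<noteq> 0" "j \<noteq> 0" "m \<le> i" | "i \<noteq> 0" "j \<noteq> 0" "i < m" "m \<le> j" by linarith
    then show ?thesis
    proof cases
      case 1 then show ?thesis using T1[OF that] m1 by (auto simp: N_def mat_diff_def block_diag_def)
    next
      case 2 then show ?thesis using T1[OF that] m1 by (auto simp: N_def mat_diff_def block_diag_def)
    next
      case 3 then show ?thesis by (auto simp: N_def mat_diff_def block_diag_def)
    next
      case 4 then show ?thesis using T1[OF that] H2[OF _ that(1)] m1 by (auto simp: N_def mat_diff_def block_diag_def)
    next
      case 5 then show ?thesis using T1[OF that] H3[OF _ _ that(2)] m1 by (auto simp: N_def mat_diff_def block_diag_def)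
    qed
  qed
  define c where "c = (\<lambda>i. H i 0)"
  define a where "a = (\<lambda>i::nat. if i = 0 then (\<Sum>j<n. c j * v j) else 0)"
  define b where "b = (\<lambda>i::nat. if i = 0 then 0 else c i * v 0)"
  have n0: "0 < n" using m1 mn by simp
  have Nv: "mat_vec n N v i = a i + b i" if "i < n" for i
  proof (cases "i = 0")
    case True
    then show ?thesis using Nij that by (simp add: mat_vec_def a_def b_def c_def Hsym[of 0])
  next
    case False
    have "mat_vec n N v i = (\<Sum>j<n. if j = 0 then H i 0 * v j else 0)"
      unfolding mat_vec_def by (rule sum.cong) (use Nij that False in auto)
    also have "\<dots> = H i 0 * v 0" using n0 by (simp add: sum.delta')
    finally show ?thesis using False by (simp add: a_def b_def c_def)
  qed
  have "vec_norm n c = vec_norm n (\<lambda>l. h l * U l 0)"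
  proof -
    have "vec_norm n c = vec_norm n (\<lambda>i. \<Sum>l<n. complex_of_real (Ur i l) * (h l * U l 0))"
      unfolding c_def H_def U_def by (rule vec_norm_cong) (simp add: mult_ac)
    also have "\<dots> = vec_norm n (\<lambda>l. h l * U l 0)"
    proof (rule vec_norm_orth)
      fix k l assume kl: "k < n" "l < n"
      have "(\<Sum>i<n. Ur i k * Ur i l) = (\<Sum>i<n. Ur k i * Ur i l)"
        by (rule sum.cong) (auto simp: sym[of _ k])
      then show "(\<Sum>i<n. Ur i k * Ur i l) = (if k = l then 1 else 0)" using orth[OF kl] by simp
    qed
    finally show ?thesis .
  qed
  moreover have "vec_norm n a \<le> vec_norm n c"
  proof -
    have "vec_norm n a = cmod (\<Sum>j<n. c j * v j)" unfolding a_def by (rule vec_norm_single[OF n0])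
    also have "\<dots> \<le> vec_norm n c * vec_norm n v" by (rule vec_norm_cs)
    also have "\<dots> \<le> vec_norm n c" using v mult_left_le[of "vec_norm n v" "vec_norm n c"]
      by (simp add: vec_norm_def)
    finally show ?thesis .
  qed
  moreover have "vec_norm n b \<le> vec_norm n c"
  proof -
    have "vec_norm n b \<le> vec_norm n (\<lambda>i. c i * v 0)" unfolding b_def by (rule vec_norm_zero0)
    also have "\<dots> = vec_norm n c * cmod (v 0)" by (rule vec_norm_scale)
    also have "\<dots> \<le> vec_norm n c" using vec_norm_comp[OF n0, of v] v
        mult_left_le[of "cmod (v 0)" "vec_norm n c"]
      by (simp add: vec_norm_def)
    finally show ?thesis .
  qed
  moreover have "vec_norm n (mat_vec n N v) \<le> vec_norm n a + vec_norm n b"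
    using vec_norm_cong[of n "mat_vec n N v" "\<lambda>i. a i + b i"] Nv vec_norm_triangle by metis
  ultimately show ?thesis unfolding N_def h_def U_def by linarith
qed


lemma householder:
  fixes w :: "nat \<Rightarrow> real"
  assumes m1: "1 \<le> m" and sumw: "(\<Sum>k<m. (w k)\<^sup>2) = 1" and w0: "0 \<le> w 0"
    and Ur: "Ur = (\<lambda>i j. if i < m \<and> j < m then (w i + (if i = 0 then 1 else 0)) * (w j + (if j = 0 then 1 else 0)) / (1 + w 0) - (if i = j then 1 else 0) else (if i = j then 1 else 0))"
  shows "\<And>i j. Ur i j = Ur j i"
    and "\<And>i j. m \<le> i \<Longrightarrow> Ur i j = (if i = j then 1 else 0)"
    and "\<And>i j. i < m \<Longrightarrow> j < m \<Longrightarrow> (\<Sum>k<m. Ur i k * Ur k j) = (if i = j then 1 else 0)"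
    and "\<And>l. Ur l 0 = (if l < m then w l else 0)"
proof -
  define v where "v = (\<lambda>k. w k + (if k = 0 then 1 else 0))"
  define \<alpha> where "\<alpha> = 1 + w 0"
  have \<alpha>pos: "\<alpha> > 0" using w0 by (simp add: \<alpha>_def)
  have Ur': "Ur = (\<lambda>i j. if i < m \<and> j < m then v i * v j / \<alpha> - (if i = j then 1 else 0) else (if i = j then 1 else 0))"
    unfolding Ur v_def \<alpha>_def by simp
  show "Ur i j = Ur j i" for i j unfolding Ur' by (auto simp: mult.commute)
  show "m \<le> i \<Longrightarrow> Ur i j = (if i = j then 1 else 0)" for i j unfolding Ur' by auto
  show "Ur l 0 = (if l < m then w l else 0)" for l
    using m1 \<alpha>pos unfolding Ur' by (auto simp: v_def \<alpha>_def field_simps)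
  have sv: "(\<Sum>k<m. (v k)\<^sup>2) = 2 * \<alpha>"
  proof -
    have "(\<Sum>k<m. (v k)\<^sup>2) = (\<Sum>k<m. (w k)\<^sup>2 + (if k = 0 then 2 * w k + 1 else 0))"
      by (rule sum.cong) (auto simp: v_def power2_eq_square algebra_simps)
    also have "\<dots> = 1 + (2 * w 0 + 1)" using m1 by (simp add: sum.distrib sumw sum.delta)
    finally show ?thesis by (simp add: \<alpha>_def)
  qed
  fix i j assume ij: "i < m" "j < m"
  have "(\<Sum>k<m. Ur i k * Ur k j) = (\<Sum>k<m. (v i * v j / \<alpha>\<^sup>2) * (v k)\<^sup>2 - (if i = k then v k * v j / \<alpha> else 0)
       - (if k = j then v i * v k / \<alpha> else 0) + (if i = k then (if k = j then 1 else 0) else 0))"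
    by (rule sum.cong) (use ij \<alpha>pos in \<open>auto simp: Ur' power2_eq_square field_simps\<close>)
  also have "\<dots> = (v i * v j / \<alpha>\<^sup>2) * (\<Sum>k<m. (v k)\<^sup>2) - v i * v j / \<alpha> - v i * v j / \<alpha> + (if i = j then 1 else 0)"
    using ij by (simp add: sum.distrib sum_subtractf sum_distrib_left sum.delta sum.delta')
  also have "\<dots> = (if i = j then 1 else 0)"
    using \<alpha>pos unfolding sv by (simp add: field_simps power2_eq_square)
  finally show "(\<Sum>k<m. Ur i k * Ur k j) = (if i = j then 1 else 0)" .
qed


lemma mat_norm_le:
  assumes "\<And>v. vec_norm n v \<le> 1 \<Longrightarrow> vec_norm n (mat_vec n A v) \<le> K"
  shows "mat_norm n A \<le> K"
  unfolding mat_norm_def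
proof (rule cSup_least)
  have "vec_norm n (\<lambda>_. 0) \<le> 1" by (simp add: vec_norm_def L2_set_def)
  then show "{vec_norm n (mat_vec n A v) |v. vec_norm n v \<le> 1} \<noteq> {}" by blast
qed (use assms in auto)

lemma conj_diag:
  assumes "\<And>i j. cnj (U i j) = U j i"
  shows "mat_mul n (mat_mul n U (diag_hom lam f y)) (mat_adj U) = (\<lambda>i j. \<Sum>l<n. U i l * f (lam l y) * U l j)"
proof (intro ext)
  fix i j
  have "mat_mul n (mat_mul n U (diag_hom lam f y)) (mat_adj U) i j
     = (\<Sum>l<n. (\<Sum>k<n. if k = l then U i k * f (lam k y) else 0) * U l j)"
    unfolding mat_mul_def mat_adj_def diag_hom_def
    by (rule sum.cong[OF refl]) (simp add: assms if_distrib cong: if_cong)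
  also have "\<dots> = (\<Sum>l<n. U i l * f (lam l y) * U l j)"
    by (rule sum.cong[OF refl]) (simp add: sum.delta')
  finally show "mat_mul n (mat_mul n U (diag_hom lam f y)) (mat_adj U) i j = (\<Sum>l<n. U i l * f (lam l y) * U l j)" .
qed

lemma unitary_real:
  fixes Ur :: "nat \<Rightarrow> nat \<Rightarrow> real"
  assumes sym: "\<And>i j. Ur i j = Ur j i"
   and orth: "\<And>i j. i < n \<Longrightarrow> j < n \<Longrightarrow> (\<Sum>k<n. Ur i k * Ur k j) = (if i = j then 1 else 0)"
  shows "unitary_mat n (\<lambda>i j. complex_of_real (Ur i j))"
proof -
  have "mat_mul n (\<lambda>i j. complex_of_real (Ur i j)) (mat_adj (\<lambda>i j. complex_of_real (Ur i j))) i j = mat_id i j"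
    if "i < n" "j < n" for i j
  proof -
    have "mat_mul n (\<lambda>i j. complex_of_real (Ur i j)) (mat_adj (\<lambda>i j. complex_of_real (Ur i j))) i j
        = complex_of_real (\<Sum>k<n. Ur i k * Ur k j)"
      unfolding mat_mul_def mat_adj_def of_real_sum by (rule sum.cong) (auto simp: sym[of j])
    then show ?thesis using orth[OF that] by (simp add: mat_id_def)
  qed
  moreover have "mat_mul n (mat_adj (\<lambda>i j. complex_of_real (Ur i j))) (\<lambda>i j. complex_of_real (Ur i j)) i j = mat_id i j"
    if "i < n" "j < n" for i j
  proof -
    have "mat_mul n (mat_adj (\<lambda>i j. complex_of_real (Ur i j))) (\<lambda>i j. complex_of_real (Ur i j)) i j
        = complex_of_real (\<Sum>k<n. Ur i k * Ur k j)"
      unfolding mat_mul_def mat_adj_def of_real_sum by (rule sum.cong) (auto simp: sym[of k i for k])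
    then show ?thesis using orth[OF that] by (simp add: mat_id_def)
  qed
  ultimately show ?thesis unfolding unitary_mat_def mat_eq_def by auto
qed

theorem theorem3p1:
  fixes lam :: "nat \<Rightarrow> 'b::metric_space \<Rightarrow> 'a::metric_space"
    and f :: "'a \<Rightarrow> complex" and x0 :: 'a
    and F :: "nat \<Rightarrow> 'b set" and n m :: nat and \<epsilon> \<eta> :: real
  assumes X_compact: "compact (UNIV :: 'a set)"
    and Y_compact: "compact (UNIV :: 'b set)"
    and lam_cont: "\<And>i. i < n \<Longrightarrow> continuous_on UNIV (lam i)"
    and f_cont: "continuous_on UNIV f"
    and eps_pos: "\<epsilon> > 0"
    and eta_pos: "\<eta> > 0"
    and eta: "\<And>x y. dist x y < 2 * \<eta> \<Longrightarrow> cmod (f x - f y) < \<epsilon>"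
    and m_pos: "1 \<le> m" and m_le: "m \<le> n"
    and F_closed: "\<And>i. i < m \<Longrightarrow> closed (F i)"
    and F_nonempty: "\<And>i. i < m \<Longrightarrow> F i \<noteq> {}"
    and F_close: "\<And>i y. i < m \<Longrightarrow> y \<in> F i \<Longrightarrow> dist (lam i y) x0 < \<eta>"
  shows "\<exists>u :: 'b \<Rightarrow> cmat. \<exists>b :: 'b \<Rightarrow> cmat.
      (\<forall>i<n. \<forall>j<n. continuous_on UNIV (\<lambda>y. u y i j))
    \<and> (\<forall>y. unitary_mat n (u y))
    \<and> (\<forall>y. \<forall>i<n. \<forall>j<n. (m \<le> i \<or> m \<le> j) \<longrightarrow> u y i j = mat_id i j)
    \<and> (\<forall>i<m - 1. \<forall>j<m - 1. continuous_on UNIV (\<lambda>y. b y i j))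
    \<and> (\<forall>y \<in> (\<Union>i<m. F i).
         mat_norm n (mat_diff
            (mat_mul n (mat_mul n (u y) (diag_hom lam f y)) (mat_adj (u y)))
            (block_diag m (f x0) (b y) (\<lambda>k. f (lam k y)))) < 2 * \<epsilon>)"
proof -
  define s where "s = (\<lambda>k y. max 0 (\<epsilon> - cmod (f (lam k y) - f x0)))"
  define S where "S = (\<lambda>y. \<Sum>k<m. s k y)"
  define K where "K = (\<Union>i<m. F i)"
  have gc: "continuous_on UNIV (\<lambda>y. f (lam k y))" if "k < n" for k
    by (rule continuous_on_compose2[OF f_cont lam_cont[OF that]]) auto
  have sc: "continuous_on UNIV (s k)" if "k < m" for k
    unfolding s_def using gc[of k] that m_le by (auto intro!: continuous_intros)
  have Sc: "continuous_on UNIV S"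
    unfolding S_def by (auto intro!: continuous_intros sc)
  have s_nn: "0 \<le> s k y" for k y by (simp add: s_def)
  have s_pos: "0 < s i y" if "i < m" "y \<in> F i" for i y
  proof -
    have "dist (lam i y) x0 < 2 * \<eta>" using F_close[OF that] eta_pos by simp
    then have "cmod (f (lam i y) - f x0) < \<epsilon>" by (rule eta)
    then show ?thesis by (simp add: s_def)
  qed
  have S_ge: "s i y \<le> S y" if "i < m" for i y
    unfolding S_def by (rule member_le_sum) (use that s_nn in auto)
  have Kc: "compact K"
  proof -
    have "closed K" unfolding K_def by (rule closed_UN) (auto intro: F_closed)
    then show ?thesis using compact_Int_closed[OF Y_compact] by force
  qed
  have Kne: "K \<noteq> {}" using F_nonempty[of 0] m_pos unfolding K_def by auto
  obtain y0 where y0: "y0 \<in> K" "\<And>y. y \<in> K \<Longrightarrow> S y0 \<le> S y"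
    using continuous_attains_inf[OF Kc Kne continuous_on_subset[OF Sc]] by auto
  define \<delta> where "\<delta> = S y0"
  have \<delta>pos: "\<delta> > 0"
  proof -
    obtain i where "i < m" "y0 \<in> F i" using y0(1) unfolding K_def by auto
    then show ?thesis using s_pos S_ge unfolding \<delta>_def by (meson less_le_trans)
  qed
  define M where "M = (\<lambda>y. max (S y) \<delta>)"
  have Mpos: "M y > 0" for y using \<delta>pos by (simp add: M_def)
  have SM: "S y \<le> M y" for y by (simp add: M_def)
  have S_nn: "0 \<le> S y" for y unfolding S_def by (rule sum_nonneg) (simp add: s_nn)
  define p where "p = (\<lambda>k y. s k y / M y + (if k = 0 then 1 else 0) * (1 - S y / M y))"
  have p_nn: "0 \<le> p k y" for k y
  proof -
    have "S y / M y \<le> 1" using Mpos[of y] SM[of y] by simp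
    moreover have "0 \<le> s k y / M y" using Mpos[of y] s_nn[of k y] by simp
    ultimately show ?thesis by (simp add: p_def)
  qed
  have p_sum: "(\<Sum>k<m. p k y) = 1" for y
  proof -
    have "(\<Sum>k<m. p k y) = (\<Sum>k<m. s k y) / M y + (1 - S y / M y)"
    proof -
      have d: "(\<Sum>k<m. (if k = 0 then 1 else 0) * c) = c" for c :: real
      proof -
        have "(\<Sum>k<m. (if k = 0 then 1 else 0) * c) = (\<Sum>k<m. if k = 0 then c else 0)"
          by (rule sum.cong) auto
        then show ?thesis using m_pos by (simp add: sum.delta)
      qed
      show ?thesis by (simp add: p_def sum.distrib sum_divide_distrib[symmetric] d)
    qed
    then show ?thesis by (simp add: S_def)
  qed
  have pc: "continuous_on UNIV (p k)" if "k < m" for k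
  proof -
    have Mne: "max (S y) \<delta> \<noteq> 0" for y using Mpos[of y] by (simp add: M_def)
    show ?thesis unfolding p_def M_def using sc[OF that] Sc
      by (auto intro!: continuous_intros simp: Mne)
  qed
  define w where "w = (\<lambda>y k. sqrt (p k y))"
  have w_sq: "(w y k)\<^sup>2 = p k y" for y k by (simp add: w_def p_nn)
  have w0: "0 \<le> w y 0" for y by (simp add: w_def p_nn)
  define Ur where "Ur = (\<lambda>y i j. if i < m \<and> j < m then (w y i + (if i = 0 then 1 else 0)) * (w y j + (if j = 0 then 1 else 0)) / (1 + w y 0) - (if i = j then 1 else 0) else (if i = j then (1::real) else 0))"
  have sumw: "(\<Sum>k<m. (w y k)\<^sup>2) = 1" for y by (simp add: w_sq p_sum)
  have Usym: "Ur y i j = Ur y j i" for y i j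
    by (rule householder(1)[OF m_pos sumw w0, of "Ur y"]) (simp add: Ur_def)
  have Uout: "m \<le> i \<Longrightarrow> Ur y i j = (if i = j then 1 else 0)" for y i j
    by (rule householder(2)[OF m_pos sumw w0, of "Ur y"]) (simp_all add: Ur_def)
  have Uorm: "i < m \<Longrightarrow> j < m \<Longrightarrow> (\<Sum>k<m. Ur y i k * Ur y k j) = (if i = j then 1 else 0)" for y i j
    by (rule householder(3)[OF m_pos sumw w0, of "Ur y"]) (simp_all add: Ur_def)
  have Uorth: "i < n \<Longrightarrow> j < n \<Longrightarrow> (\<Sum>k<n. Ur y i k * Ur y k j) = (if i = j then 1 else 0)" for y i j
    by (rule orth_n[OF m_le Usym Uout Uorm])
  have Ucol: "Ur y l 0 = (if l < m then w y l else 0)" for y l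
    by (rule householder(4)[OF m_pos sumw w0, of "Ur y"]) (simp add: Ur_def)
  define u where "u = (\<lambda>y i j. complex_of_real (Ur y i j))"
  define b where "b = (\<lambda>y i j. \<Sum>l<n. u y (Suc i) l * f (lam l y) * u y l (Suc j))"
  have uc: "continuous_on UNIV (\<lambda>y. u y i j)" for i j
  proof (cases "i < m \<and> j < m")
    case True
    have wc: "continuous_on UNIV (\<lambda>y. w y k)" if "k < m" for k
      unfolding w_def using pc[OF that] by (auto intro!: continuous_intros)
    have "continuous_on UNIV (\<lambda>y. Ur y i j)"
      unfolding Ur_def using True wc[of i] wc[of j] wc[of 0] m_pos w0
      by (auto intro!: continuous_intros simp: add_nonneg_eq_0_iff)
    then show ?thesis unfolding u_def by (auto intro!: continuous_intros)
  next
    case False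
    then have "(\<lambda>y. u y i j) = (\<lambda>y. complex_of_real (if i = j then 1 else 0))"
      by (auto simp: u_def Ur_def)
    then show ?thesis by (simp only:) (rule continuous_on_const)
  qed
  show ?thesis
  proof (rule exI[of _ u], rule exI[of _ b], intro conjI allI impI ballI)
    show "continuous_on UNIV (\<lambda>y. u y i j)" for i j by (rule uc)
    show "unitary_mat n (u y)" for y unfolding u_def by (rule unitary_real[OF Usym Uorth])
    show "u y i j = mat_id i j" if "i < n" "j < n" "m \<le> i \<or> m \<le> j" for y i j
      using that Uout[of i y j] Uout[of j y i] Usym[of y i j] by (auto simp: u_def mat_id_def)
    show "continuous_on UNIV (\<lambda>y. b y i j)" if "i < m - 1" "j < m - 1" for i j
      unfolding b_def by (auto intro!: continuous_intros uc gc)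
    fix y assume yK: "y \<in> (\<Union>i<m. F i)"
    obtain i0 where i0: "i0 < m" "y \<in> F i0" using yK by auto
    have "S y \<ge> \<delta>" using y0(2)[of y] yK unfolding \<delta>_def K_def by auto
    then have MS: "M y = S y" by (simp add: M_def)
    have Spos: "S y > 0" using \<open>S y \<ge> \<delta>\<close> \<delta>pos by simp
    let ?e = "\<lambda>l. f (lam l y) - f x0"
    have bound: "vec_norm n (\<lambda>l. (f (lam l y) - (if l < m then f x0 else 0)) * complex_of_real (Ur y l 0)) < \<epsilon>"
    proof -
      have "(\<Sum>l<n. (cmod ((f (lam l y) - (if l < m then f x0 else 0)) * complex_of_real (Ur y l 0)))\<^sup>2)
          = (\<Sum>l<m. (cmod (?e l))\<^sup>2 * p l y)"
        by (rule sum.mono_neutral_cong_right)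
          (use m_le in \<open>auto simp: Ucol norm_mult power_mult_distrib w_sq\<close>)
      also have "\<dots> < (\<Sum>l<m. \<epsilon>\<^sup>2 * p l y)"
      proof (rule sum_strict_mono_ex1)
        have key: "(cmod (?e l))\<^sup>2 * p l y < \<epsilon>\<^sup>2 * p l y" if "p l y > 0" for l
        proof -
          have "s l y / S y > 0" using that MS Spos by (simp add: p_def)
          then have "s l y > 0" using S_nn[of y] by (simp add: zero_less_divide_iff)
          then have "cmod (?e l) < \<epsilon>" by (simp add: s_def)
          then have "(cmod (?e l))\<^sup>2 < \<epsilon>\<^sup>2" by (simp add: power_strict_mono)
          then show ?thesis using that by simp
        qed
        show "\<forall>l\<in>{..<m}. (cmod (?e l))\<^sup>2 * p l y \<le> \<epsilon>\<^sup>2 * p l y"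
        proof
          fix l assume "l \<in> {..<m}"
          show "(cmod (?e l))\<^sup>2 * p l y \<le> \<epsilon>\<^sup>2 * p l y"
            using key[of l] p_nn[of l y] by (cases "p l y = 0") auto
        qed
        have "p i0 y > 0" using s_pos[OF i0] Mpos[of y] MS by (simp add: p_def)
        then show "\<exists>l\<in>{..<m}. (cmod (?e l))\<^sup>2 * p l y < \<epsilon>\<^sup>2 * p l y" using key i0 by blast
      qed simp
      also have "\<dots> = \<epsilon>\<^sup>2" by (simp add: sum_distrib_left[symmetric] p_sum)
      finally have "sqrt (\<Sum>l<n. (cmod ((f (lam l y) - (if l < m then f x0 else 0)) * complex_of_real (Ur y l 0)))\<^sup>2) < sqrt (\<epsilon>\<^sup>2)"
        by (rule real_sqrt_less_mono)
      then show ?thesis unfolding vec_norm_def L2_set_def using eps_pos by simp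
    qed
    have eq: "mat_mul n (mat_mul n (u y) (diag_hom lam f y)) (mat_adj (u y))
        = (\<lambda>i j. \<Sum>l<n. complex_of_real (Ur y i l) * f (lam l y) * complex_of_real (Ur y l j))"
      unfolding u_def by (rule conj_diag) (simp add: Usym)
    have bb: "b y = (\<lambda>i j. (\<lambda>i j. \<Sum>l<n. complex_of_real (Ur y i l) * f (lam l y) * complex_of_real (Ur y l j)) (Suc i) (Suc j))"
      by (simp add: b_def u_def)
    have "mat_norm n (mat_diff (mat_mul n (mat_mul n (u y) (diag_hom lam f y)) (mat_adj (u y)))
            (block_diag m (f x0) (b y) (\<lambda>k. f (lam k y))))
        \<le> 2 * vec_norm n (\<lambda>l. (f (lam l y) - (if l < m then f x0 else 0)) * complex_of_real (Ur y l 0))"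
      unfolding eq bb
      by (rule mat_norm_le, rule core[OF m_pos m_le Usym Uout Uorth _ refl])
    also have "\<dots> < 2 * \<epsilon>" using bound by simp
    finally show "mat_norm n (mat_diff (mat_mul n (mat_mul n (u y) (diag_hom lam f y)) (mat_adj (u y)))
            (block_diag m (f x0) (b y) (\<lambda>k. f (lam k y)))) < 2 * \<epsilon>" .
  qed
qed


end
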